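(* Assume $\lambda_A>0$. Run TD-SVRG with i.i.d. sampling (Algorithm 3) with learning rate $\alpha=1/16$, inner-loop length $M=32/\lambda_A$ (assumed integer), a parameter $c>0$, and in epoch $m\ge1$ an estimation batch size $$n_m=\Big\lceil\frac{4f_e(\tilde\theta_{m-1})+2\sigma^2}{c\,\lambda_A\,(2/3)^{m}}\Big\rceil,\qquad \sigma^2=\sum_{s,s'}\mu(s)P(s,s')\|g_{s,s'}(\theta^* )\|^2.$$ Then there is a constant $C_1$ (independent of $m$) such that for every $m\ge0$, $$\mathbb E[f_e(\tilde\theta_m)]\le\left(\tfrac23\right)^m\big(f_e(\tilde\theta_0)+C_1\big).$$
   Context: Environment setting. Let $\mathcal S$ be a finite state space, $P$ an irreducible aperiodic transition matrix on $\mathcal S$ (induced by a fixed policy) with stationary distribution $\mu$, $\phi:\mathcal S\to\mathbb R^d$ a feature map with $\|\phi(s)\|_2\le1$ for all $s$, $r:\mathcal S\times\mathcal S\to\mathbb R$ a reward function and $\gamma\in[0,1)$. For states $s,s'$ and $\theta\in\mathbb R^d$ let $g_{s,s'}(\theta)=(r(s,s')+\gamma\phi(s')^T\theta-\phi(s)^T\theta)\phi(s)$. Let $A_e=\sum_{s,s'}\mu(s)P(s,s')\phi(s)(\phi(s)-\gamma\phi(s'))^T$ and $b_e=\sum_{s,s'}\mu(s)P(s,s')r(s,s')\phi(s)$; assume $A_e$ is nonsingular and let $\theta^*=A_e^{-1}b_e$. Let $\lambda_A$ be the minimum eigenvalue of $(A_e+A_e^T)/2$. Define $f_e(\theta)=(\theta-\theta^*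 )^TA_e(\theta-\theta^* )$. An i.i.d. sample is a pair $(s,s')$ with $s\sim\mu$ and then $s'\sim P(s,\cdot)$, drawn independently of all other samples. Algorithm 3 (TD-SVRG, i.i.d. sampling): given $\alpha>0$, integer $M\ge1$, batch sizes $n_m$ and initial $\tilde\theta_0$, for epochs $m=1,2,\dots$: set $\tilde\theta=\tilde\theta_{m-1}$; draw $n_m$ i.i.d. samples forming $\mathcal D^m$ and compute $g_m(\tilde\theta)=\frac1{n_m}\sum_{(s,s')\in\mathcal D^m}g_{s,s'}(\tilde\theta)$; set $\theta_0=\tilde\theta$; for $t=1,\dots,M$ draw a fresh i.i.d. sample $(s,s')$, put $v_t=g_{s,s'}(\theta_{t-1})-g_{s,s'}(\tilde\theta)+g_m(\tilde\theta)$, $\theta_t=\theta_{t-1}+\alpha v_t$; finally set $\tilde\theta_m=\theta_{t'}$ with $t'$ uniform on $\{0,\dots,M-1\}$, independent. *)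

theory Defs
  imports "HOL-Analysis.Analysis" "HOL-Probability.Probability"
begin

fun n_step :: "('s \<Rightarrow> 's pmf) \<Rightarrow> nat \<Rightarrow> 's \<Rightarrow> 's pmf" where
  "n_step P 0 s = return_pmf s"
| "n_step P (Suc n) s = bind_pmf (n_step P n s) P"

definition irreducible_chain :: "('s \<Rightarrow> 's pmf) \<Rightarrow> bool" where
  "irreducible_chain P = (\<forall>s t. \<exists>n. pmf (n_step P n s) t > 0)"

definition aperiodic_chain :: "('s \<Rightarrow> 's pmf) \<Rightarrow> bool" where
  "aperiodic_chain P = (\<forall>s. Gcd {n. 0 < n \<and> pmf (n_step P n s) s > 0} = (1::nat))"

definition stationary_dist :: "'s pmf \<Rightarrow> ('s \<Rightarrow> 's pmf) \<Rightarrow> bool" where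
  "stationary_dist \<mu> P = (bind_pmf \<mu> P = \<mu>)"

definition sample_pmf :: "'s pmf \<Rightarrow> ('s \<Rightarrow> 's pmf) \<Rightarrow> ('s \<times> 's) pmf" where
  "sample_pmf \<mu> P = bind_pmf \<mu> (\<lambda>s. map_pmf (\<lambda>s'. (s, s')) (P s))"

definition td_g :: "('s \<Rightarrow> 's \<Rightarrow> real) \<Rightarrow> real \<Rightarrow> ('s \<Rightarrow> real^'d) \<Rightarrow> 's \<Rightarrow> 's \<Rightarrow> real^'d \<Rightarrow> real^'d" where
  "td_g r \<gamma> \<phi> s s' \<theta> = (r s s' + \<gamma> * (\<phi> s' \<bullet> \<theta>) - \<phi> s \<bullet> \<theta>) *\<^sub>R \<phi> s"

definition outer_prod :: "real^'d \<Rightarrow> real^'d \<Rightarrow> real^'d^'d" where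
  "outer_prod u v = (\<chi> i j. u $ i * v $ j)"

definition A_e :: "('s::finite) pmf \<Rightarrow> ('s \<Rightarrow> 's pmf) \<Rightarrow> ('s \<Rightarrow> real^'d) \<Rightarrow> real \<Rightarrow> real^'d^'d" where
  "A_e \<mu> P \<phi> \<gamma> = (\<Sum>s\<in>UNIV. \<Sum>s'\<in>UNIV.
      (pmf \<mu> s * pmf (P s) s') *\<^sub>R outer_prod (\<phi> s) (\<phi> s - \<gamma> *\<^sub>R \<phi> s'))"

definition b_e :: "('s::finite) pmf \<Rightarrow> ('s \<Rightarrow> 's pmf) \<Rightarrow> ('s \<Rightarrow> 's \<Rightarrow> real) \<Rightarrow> ('s \<Rightarrow> real^'d) \<Rightarrow> real^'d" where
  "b_e \<mu> P r \<phi> = (\<Sum>s\<in>UNIV. \<Sum>s'\<in>UNIV. (pmf \<mu> s * pmf (P s) s' * r s s') *\<^sub>R \<phi> s)"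

definition theta_star :: "('s::finite) pmf \<Rightarrow> ('s \<Rightarrow> 's pmf) \<Rightarrow> ('s \<Rightarrow> 's \<Rightarrow> real) \<Rightarrow> ('s \<Rightarrow> real^'d) \<Rightarrow> real \<Rightarrow> real^'d" where
  "theta_star \<mu> P r \<phi> \<gamma> = matrix_inv (A_e \<mu> P \<phi> \<gamma>) *v b_e \<mu> P r \<phi>"

definition min_eigenvalue :: "real^'d^'d \<Rightarrow> real" where
  "min_eigenvalue S = Min {l. \<exists>v. v \<noteq> 0 \<and> S *v v = l *\<^sub>R v}"

definition lambda_A :: "('s::finite) pmf \<Rightarrow> ('s \<Rightarrow> 's pmf) \<Rightarrow> ('s \<Rightarrow> real^'d) \<Rightarrow> real \<Rightarrow> real" where
  "lambda_A \<mu> P \<phi> \<gamma> =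
     min_eigenvalue ((1/2) *\<^sub>R (A_e \<mu> P \<phi> \<gamma> + transpose (A_e \<mu> P \<phi> \<gamma>)))"

definition f_e :: "('s::finite) pmf \<Rightarrow> ('s \<Rightarrow> 's pmf) \<Rightarrow> ('s \<Rightarrow> 's \<Rightarrow> real) \<Rightarrow> ('s \<Rightarrow> real^'d) \<Rightarrow> real \<Rightarrow> real^'d \<Rightarrow> real" where
  "f_e \<mu> P r \<phi> \<gamma> \<theta> =
     (\<theta> - theta_star \<mu> P r \<phi> \<gamma>) \<bullet> (A_e \<mu> P \<phi> \<gamma> *v (\<theta> - theta_star \<mu> P r \<phi> \<gamma>))"

definition sigma_sq :: "('s::finite) pmf \<Rightarrow> ('s \<Rightarrow> 's pmf) \<Rightarrow> ('s \<Rightarrow> 's \<Rightarrow> real) \<Rightarrow> ('s \<Rightarrow> real^'d) \<Rightarrow> real \<Rightarrow> real" where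
  "sigma_sq \<mu> P r \<phi> \<gamma> = (\<Sum>s\<in>UNIV. \<Sum>s'\<in>UNIV.
      pmf \<mu> s * pmf (P s) s' * (norm (td_g r \<gamma> \<phi> s s' (theta_star \<mu> P r \<phi> \<gamma>)))\<^sup>2)"

fun iid_samples :: "'a pmf \<Rightarrow> nat \<Rightarrow> 'a list pmf" where
  "iid_samples D 0 = return_pmf []"
| "iid_samples D (Suc n) = bind_pmf D (\<lambda>x. map_pmf (\<lambda>xs. x # xs) (iid_samples D n))"

definition batch_grad :: "('s \<Rightarrow> 's \<Rightarrow> real) \<Rightarrow> real \<Rightarrow> ('s \<Rightarrow> real^'d) \<Rightarrow> ('s \<times> 's) list \<Rightarrow> real^'d \<Rightarrow> real^'d" where
  "batch_grad r \<gamma> \<phi> xs \<theta> =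
     (1 / real (length xs)) *\<^sub>R sum_list (map (\<lambda>(s, s'). td_g r \<gamma> \<phi> s s' \<theta>) xs)"

fun inner_iter :: "('s \<times> 's) pmf \<Rightarrow> ('s \<Rightarrow> 's \<Rightarrow> real) \<Rightarrow> real \<Rightarrow> ('s \<Rightarrow> real^'d) \<Rightarrow> real
     \<Rightarrow> real^'d \<Rightarrow> real^'d \<Rightarrow> nat \<Rightarrow> (real^'d) pmf" where
  "inner_iter D r \<gamma> \<phi> \<alpha> \<theta>t gm 0 = return_pmf \<theta>t"
| "inner_iter D r \<gamma> \<phi> \<alpha> \<theta>t gm (Suc t) =
     bind_pmf (inner_iter D r \<gamma> \<phi> \<alpha> \<theta>t gm t) (\<lambda>\<theta>.
       map_pmf (\<lambda>(s, s'). \<theta> + \<alpha> *\<^sub>R (td_g r \<gamma> \<phi> s s' \<theta> - td_g r \<gamma> \<phi> s s' \<theta>t + gm)) D)"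

definition svrg_epoch :: "('s \<times> 's) pmf \<Rightarrow> ('s \<Rightarrow> 's \<Rightarrow> real) \<Rightarrow> real \<Rightarrow> ('s \<Rightarrow> real^'d) \<Rightarrow> real
     \<Rightarrow> nat \<Rightarrow> nat \<Rightarrow> real^'d \<Rightarrow> (real^'d) pmf" where
  "svrg_epoch D r \<gamma> \<phi> \<alpha> M n \<theta>t =
     bind_pmf (iid_samples D n) (\<lambda>xs.
       bind_pmf (pmf_of_set {0..<M}) (\<lambda>t'.
         inner_iter D r \<gamma> \<phi> \<alpha> \<theta>t (batch_grad r \<gamma> \<phi> xs \<theta>t) t'))"

text \<open>Distribution of theta~_m; the batch size of epoch m is N m theta~_{m-1}.\<close>
fun svrg_outer :: "('s \<times> 's) pmf \<Rightarrow> ('s \<Rightarrow> 's \<Rightarrow> real) \<Rightarrow> real \<Rightarrow> ('s \<Rightarrow> real^'d) \<Rightarrow> real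
     \<Rightarrow> nat \<Rightarrow> (nat \<Rightarrow> real^'d \<Rightarrow> nat) \<Rightarrow> real^'d \<Rightarrow> nat \<Rightarrow> (real^'d) pmf" where
  "svrg_outer D r \<gamma> \<phi> \<alpha> M N \<theta>0 0 = return_pmf \<theta>0"
| "svrg_outer D r \<gamma> \<phi> \<alpha> M N \<theta>0 (Suc m) =
     bind_pmf (svrg_outer D r \<gamma> \<phi> \<alpha> M N \<theta>0 m) (\<lambda>\<theta>t.
       svrg_epoch D r \<gamma> \<phi> \<alpha> M (N (Suc m) \<theta>t) \<theta>t)"

end

theory Submission
  imports Defs
begin


lemma exp_finite_sum:
  fixes g :: "'a \<Rightarrow> real"
  assumes "finite A" "set_pmf p \<subseteq> A"
  shows "measure_pmf.expectation p g = (\<Sum>a\<in>A. pmf p a * g a)"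
  using assms by (subst integral_measure_pmf_real[of A]) (auto simp: mult.commute)

lemma exp_bind:
  fixes g :: "'b \<Rightarrow> real"
  assumes fp: "finite (set_pmf p)" and fN: "\<And>x. x \<in> set_pmf p \<Longrightarrow> finite (set_pmf (N x))"
  shows "measure_pmf.expectation (bind_pmf p N) g =
         measure_pmf.expectation p (\<lambda>x. measure_pmf.expectation (N x) g)"
proof -
  define S where "S = (\<Union>x\<in>set_pmf p. set_pmf (N x))"
  have fS: "finite S" using fp fN by (auto simp: S_def)
  have "measure_pmf.expectation (bind_pmf p N) g = (\<Sum>y\<in>S. pmf (bind_pmf p N) y * g y)"
    by (rule exp_finite_sum[OF fS]) (auto simp: S_def)
  also have "\<dots> = (\<Sum>y\<in>S. (\<Sum>x\<in>set_pmf p. pmf p x * pmf (N x) y) * g y)"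
    by (intro sum.cong refl, subst pmf_bind, subst exp_finite_sum[OF fp]) auto
  also have "\<dots> = (\<Sum>x\<in>set_pmf p. pmf p x * (\<Sum>y\<in>S. pmf (N x) y * g y))"
    by (simp add: sum_distrib_left sum_distrib_right mult.assoc) (rule sum.swap)
  also have "\<dots> = (\<Sum>x\<in>set_pmf p. pmf p x * measure_pmf.expectation (N x) g)"
    by (intro sum.cong refl arg_cong2[where f="(*)"], subst exp_finite_sum[OF fS]) (auto simp: S_def)
  also have "\<dots> = measure_pmf.expectation p (\<lambda>x. measure_pmf.expectation (N x) g)"
    by (rule exp_finite_sum[symmetric, OF fp]) auto
  finally show ?thesis .
qed

lemma exp_const: "measure_pmf.expectation p (\<lambda>_. c::real) = c"
  by simp

lemma exp_mono:
  fixes f g :: "'a \<Rightarrow> real"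
  assumes "finite (set_pmf p)" "\<And>x. x \<in> set_pmf p \<Longrightarrow> f x \<le> g x"
  shows "measure_pmf.expectation p f \<le> measure_pmf.expectation p g"
  using assms by (simp add: exp_finite_sum[OF assms(1) order_refl] sum_mono mult_left_mono)

lemma exp_add:
  fixes f g :: "'a \<Rightarrow> real"
  assumes "finite (set_pmf p)"
  shows "measure_pmf.expectation p (\<lambda>x. f x + g x) = measure_pmf.expectation p f + measure_pmf.expectation p g"
  using assms by (simp add: exp_finite_sum[OF assms(1) order_refl] sum.distrib algebra_simps)

lemma exp_diff:
  fixes f g :: "'a \<Rightarrow> real"
  assumes "finite (set_pmf p)"
  shows "measure_pmf.expectation p (\<lambda>x. f x - g x) = measure_pmf.expectation p f - measure_pmf.expectation p g"
  using assms by (simp add: exp_finite_sum[OF assms(1) order_refl] sum_subtractf algebra_simps)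

lemma exp_cmult:
  fixes f :: "'a \<Rightarrow> real"
  assumes "finite (set_pmf p)"
  shows "measure_pmf.expectation p (\<lambda>x. c * f x) = c * measure_pmf.expectation p f"
  by simp




lemma sym_inner:
  fixes S :: "real^'d^'d"
  assumes "transpose S = S"
  shows "u \<bullet> (S *v w) = w \<bullet> (S *v u)"
proof -
  have "u \<bullet> (S *v w) = (u v* S) \<bullet> w" by (simp add: dot_lmul_matrix)
  also have "\<dots> = (transpose S *v u) \<bullet> w" by (simp add: transpose_matrix_vector)
  finally show ?thesis using assms by (simp add: inner_commute)
qed

lemma eig_finite:
  fixes S :: "real^'d^'d"
  assumes sym: "transpose S = S"
  shows "finite {l. \<exists>v. v \<noteq> 0 \<and> S *v v = l *\<^sub>R v}"
proof -
  define E where "E = {l. \<exists>v. v \<noteq> 0 \<and> S *v v = l *\<^sub>R v}"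
  define V where "V = (\<lambda>l. SOME v. v \<noteq> 0 \<and> S *v v = l *\<^sub>R v)"
  have V: "V l \<noteq> 0 \<and> S *v V l = l *\<^sub>R V l" if "l \<in> E" for l
  proof -
    have "\<exists>v. v \<noteq> 0 \<and> S *v v = l *\<^sub>R v" using that by (simp add: E_def)
    from someI_ex[OF this] show ?thesis by (simp add: V_def)
  qed
  have orth: "V l \<bullet> V l' = 0" if "l \<in> E" "l' \<in> E" "l \<noteq> l'" for l l'
  proof -
    have "V l \<bullet> (S *v V l') = V l' \<bullet> (S *v V l)" by (rule sym_inner[OF sym])
    hence "l' * (V l \<bullet> V l') = l * (V l \<bullet> V l')"
      using V[OF that(1)] V[OF that(2)] by (simp add: inner_commute)
    thus ?thesis using that(3) by simp
  qed
  have inj: "inj_on V E"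
  proof (rule inj_onI)
    fix l l' assume "l \<in> E" "l' \<in> E" "V l = V l'"
    thus "l = l'" using orth[of l l'] V[of l] by force
  qed
  have "pairwise orthogonal (V ` E)"
    unfolding pairwise_def orthogonal_def using orth by auto
  moreover have "0 \<notin> V ` E" using V by force
  ultimately have "independent (V ` E)" by (rule pairwise_orthogonal_independent)
  hence "finite (V ` E)" using independent_bound by blast
  thus ?thesis using inj finite_imageD unfolding E_def by blast
qed

lemma rayleigh:
  fixes S :: "real^'d^'d"
  assumes sym: "transpose S = S"
  shows "min_eigenvalue S * (norm u)\<^sup>2 \<le> u \<bullet> (S *v u)"
proof -
  define q where "q = (\<lambda>u. u \<bullet> (S *v u))"
  have cq: "continuous_on (sphere 0 1) q" unfolding q_def
    by (intro continuous_intros)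
  have ne: "sphere (0::real^'d) 1 \<noteq> {}"
  proof -
    obtain b :: "real^'d" where "b \<in> Basis" by (meson ex_in_conv nonempty_Basis)
    hence "b \<in> sphere 0 1" by simp
    thus ?thesis by blast
  qed
  obtain v where v: "v \<in> sphere 0 1" and vmin: "\<And>y. y \<in> sphere 0 1 \<Longrightarrow> q v \<le> q y"
    using continuous_attains_inf[OF compact_sphere ne cq] by blast
  define mu where "mu = q v"
  have qhom: "q (c *\<^sub>R y) = c\<^sup>2 * q y" for c y
    by (simp add: q_def matrix_vector_mult_scaleR power2_eq_square)
  have all: "mu * (norm y)\<^sup>2 \<le> q y" for y
  proof (cases "y = 0")
    case True thus ?thesis by (simp add: q_def)
  next
    case False
    have "(1 / norm y) *\<^sub>R y \<in> sphere 0 1" using False by simp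
    hence "mu \<le> q ((1 / norm y) *\<^sub>R y)" using vmin mu_def by blast
    also have "\<dots> = q y / (norm y)\<^sup>2" by (simp add: qhom power_divide)
    finally show ?thesis using False by (simp add: field_simps)
  qed
  define w where "w = S *v v - mu *\<^sub>R v"
  have nv: "norm v = 1" using v by simp
  have key: "0 \<le> 2 * t * (norm w)\<^sup>2 + t\<^sup>2 * (q w - mu * (norm w)\<^sup>2)" for t
  proof -
    have le: "0 \<le> q (v + t *\<^sub>R w) - mu * (norm (v + t *\<^sub>R w))\<^sup>2" using all[of "v + t *\<^sub>R w"] by simp
    have e1: "q (v + t *\<^sub>R w) = q v + 2 * t * (w \<bullet> (S *v v)) + t\<^sup>2 * q w"
      using sym_inner[OF sym, of v w]
      by (simp add: q_def matrix_vector_right_distrib matrix_vector_mult_scaleR inner_add_left inner_add_right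
            power2_eq_square algebra_simps)
    have e2: "(norm (v + t *\<^sub>R w))\<^sup>2 = 1 + 2 * t * (v \<bullet> w) + t\<^sup>2 * (norm w)\<^sup>2"
    proof -
      have "(norm (v + t *\<^sub>R w))\<^sup>2 = (v + t *\<^sub>R w) \<bullet> (v + t *\<^sub>R w)" by (simp add: power2_norm_eq_inner)
      also have "\<dots> = v \<bullet> v + 2 * t * (v \<bullet> w) + t\<^sup>2 * (w \<bullet> w)"
        by (simp add: inner_add_left inner_add_right inner_commute algebra_simps power2_eq_square)
      also have "v \<bullet> v = 1" using nv by (simp add: power2_norm_eq_inner[symmetric])
      also have "w \<bullet> w = (norm w)\<^sup>2" by (simp add: power2_norm_eq_inner)
      finally show ?thesis .
    qed
    have e3: "(norm w)\<^sup>2 = w \<bullet> (S *v v) - mu * (v \<bullet> w)"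
      by (simp add: w_def power2_norm_eq_inner inner_diff_left inner_diff_right inner_commute)
        (simp add: w_def inner_diff_left inner_diff_right inner_commute algebra_simps)
    have "2 * t * (norm w)\<^sup>2 + t\<^sup>2 * (q w - mu * (norm w)\<^sup>2) = q (v + t *\<^sub>R w) - mu * (norm (v + t *\<^sub>R w))\<^sup>2"
      unfolding e1 e2 e3 by (simp add: mu_def algebra_simps)
    with le show ?thesis by simp
  qed
  have "w = 0"
  proof (rule ccontr)
    assume "w \<noteq> 0"
    define a where "a = (norm w)\<^sup>2"
    define K where "K = q w - mu * (norm w)\<^sup>2"
    have a: "a > 0" using \<open>w \<noteq> 0\<close> by (simp add: a_def)
    define t where "t = - a / (\<bar>K\<bar> + 1)"
    have "0 \<le> 2 * t * a + t\<^sup>2 * K" using key[of t] by (simp add: a_def K_def)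
    moreover have "2 * t * a + t\<^sup>2 * K < 0"
    proof -
      have d: "\<bar>K\<bar> + 1 > 0" by simp
      have "t\<^sup>2 * K \<le> t\<^sup>2 * \<bar>K\<bar>" by (simp add: mult_left_mono)
      also have "t\<^sup>2 * \<bar>K\<bar> = a\<^sup>2 * \<bar>K\<bar> / (\<bar>K\<bar> + 1)\<^sup>2" by (simp add: t_def power_divide)
      also have "\<dots> = (a\<^sup>2 / (\<bar>K\<bar> + 1)) * (\<bar>K\<bar> / (\<bar>K\<bar> + 1))"
        by (simp add: power2_eq_square)
      also have "\<dots> \<le> (a\<^sup>2 / (\<bar>K\<bar> + 1)) * 1"
        using d by (intro mult_left_mono) auto
      also have "\<dots> = a\<^sup>2 / (\<bar>K\<bar> + 1)" by simp
      finally have "2 * t * a + t\<^sup>2 * K \<le> - 2 * a\<^sup>2 / (\<bar>K\<bar> + 1) + a\<^sup>2 / (\<bar>K\<bar> + 1)"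
        by (simp add: t_def power2_eq_square)
      also have "\<dots> = - (a\<^sup>2 / (\<bar>K\<bar> + 1))" by (simp add: divide_simps)
      also have "\<dots> < 0" using a d by simp
      finally show ?thesis .
    qed
    ultimately show False by simp
  qed
  hence "S *v v = mu *\<^sub>R v" by (simp add: w_def)
  moreover have "v \<noteq> 0" using nv by auto
  ultimately have "mu \<in> {l. \<exists>v. v \<noteq> 0 \<and> S *v v = l *\<^sub>R v}" by blast
  hence "min_eigenvalue S \<le> mu"
    unfolding min_eigenvalue_def using eig_finite[OF sym] by (rule Min_le[rotated])
  hence "min_eigenvalue S * (norm u)\<^sup>2 \<le> mu * (norm u)\<^sup>2" by (simp add: mult_right_mono)
  also have "\<dots> \<le> q u" by (rule all)
  finally show ?thesis by (simp add: q_def)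
qed




lemma mv_sum: "finite I \<Longrightarrow> (\<Sum>i\<in>I. M i) *v (u::real^'d) = (\<Sum>i\<in>I. M i *v u)"
  for M :: "'i \<Rightarrow> real^'d^'e"
  by (induction I rule: finite_induct) (auto simp: matrix_vector_mult_add_rdistrib)

lemma outer_mv: "outer_prod a b *v u = (b \<bullet> u) *\<^sub>R a"
  by (simp add: vec_eq_iff outer_prod_def matrix_vector_mult_def inner_vec_def sum_distrib_left
      algebra_simps)

lemma transpose_add': "transpose (A + B) = transpose A + transpose (B::real^'n^'m)"
  by (simp add: vec_eq_iff transpose_def)

lemma inv_right: "invertible A \<Longrightarrow> A ** matrix_inv A = mat 1"
  unfolding invertible_def matrix_inv_def by (rule conjunct1, rule someI_ex)

locale td =
  fixes \<mu> :: "('s::finite) pmf" and P :: "'s \<Rightarrow> 's pmf"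
    and \<phi> :: "'s \<Rightarrow> real^'d" and r :: "'s \<Rightarrow> 's \<Rightarrow> real" and \<gamma> :: real
  assumes stat: "stationary_dist \<mu> P"
    and phi_le: "\<And>s. norm (\<phi> s) \<le> 1"
    and g0: "0 \<le> \<gamma>" and g1: "\<gamma> < 1"
    and inv: "invertible (A_e \<mu> P \<phi> \<gamma>)"
    and lpos: "lambda_A \<mu> P \<phi> \<gamma> > 0"
begin

abbreviation "D \<equiv> sample_pmf \<mu> P"
abbreviation "A \<equiv> A_e \<mu> P \<phi> \<gamma>"
abbreviation "ts \<equiv> theta_star \<mu> P r \<phi> \<gamma>"
abbreviation "lam \<equiv> lambda_A \<mu> P \<phi> \<gamma>"
abbreviation "w s s' \<equiv> pmf \<mu> s * pmf (P s) s'"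

definition H :: "'s \<times> 's \<Rightarrow> real^'d \<Rightarrow> real^'d" where
  "H \<xi> u = ((\<gamma> *\<^sub>R \<phi> (snd \<xi>) - \<phi> (fst \<xi>)) \<bullet> u) *\<^sub>R \<phi> (fst \<xi>)"

definition G0 :: "'s \<times> 's \<Rightarrow> real^'d" where
  "G0 \<xi> = td_g r \<gamma> \<phi> (fst \<xi>) (snd \<xi>) ts"

lemma finD: "finite (set_pmf (D::('s\<times>'s) pmf))" by simp

lemma expD: "measure_pmf.expectation D F = (\<Sum>s\<in>UNIV. \<Sum>s'\<in>UNIV. w s s' * F (s, s'))"
proof -
  have "measure_pmf.expectation D F =
     measure_pmf.expectation \<mu> (\<lambda>s. measure_pmf.expectation (P s) (\<lambda>s'. F (s, s')))"
    unfolding sample_pmf_def by (subst exp_bind) auto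
  also have "\<dots> = (\<Sum>s\<in>UNIV. pmf \<mu> s * (\<Sum>s'\<in>UNIV. pmf (P s) s' * F (s, s')))"
    by (simp add: exp_finite_sum[of UNIV])
  finally show ?thesis by (simp add: sum_distrib_left mult.assoc)
qed

lemma stat_sum: "(\<Sum>s\<in>UNIV. \<Sum>s'\<in>UNIV. w s s' * G s') = (\<Sum>s'\<in>UNIV. pmf \<mu> s' * G s')"
proof -
  have "(\<Sum>s\<in>UNIV. \<Sum>s'\<in>UNIV. w s s' * G s') = (\<Sum>s'\<in>UNIV. (\<Sum>s\<in>UNIV. w s s') * G s')"
    by (subst sum.swap) (simp add: sum_distrib_right)
  also have "(\<lambda>s'. \<Sum>s\<in>UNIV. w s s') = pmf \<mu>"
  proof
    fix s'
    have "pmf \<mu> s' = pmf (bind_pmf \<mu> P) s'" using stat by (simp add: stationary_dist_def)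
    also have "\<dots> = (\<Sum>s\<in>UNIV. w s s')" by (simp add: pmf_bind exp_finite_sum[of UNIV])
    finally show "(\<Sum>s\<in>UNIV. w s s') = pmf \<mu> s'" by simp
  qed
  finally show ?thesis .
qed

lemma rowsum: "(\<Sum>s'\<in>UNIV. pmf (P s) s') = 1"
  by (rule sum_pmf_eq_1) auto

lemma A_mv: "A *v u = (\<Sum>s\<in>UNIV. \<Sum>s'\<in>UNIV. (w s s' * ((\<phi> s - \<gamma> *\<^sub>R \<phi> s') \<bullet> u)) *\<^sub>R \<phi> s)"
  unfolding A_e_def by (simp add: mv_sum outer_mv scaleR_matrix_vector_assoc[symmetric])

lemma A_inner: "z \<bullet> (A *v u) = (\<Sum>s\<in>UNIV. \<Sum>s'\<in>UNIV. w s s' * ((\<phi> s - \<gamma> *\<^sub>R \<phi> s') \<bullet> u) * (z \<bullet> \<phi> s))"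
  unfolding A_mv by (simp add: inner_sum_right)

lemma A_pos: "lam * (norm u)\<^sup>2 \<le> u \<bullet> (A *v u)"
proof -
  define S where "S = (1/2) *\<^sub>R (A + transpose A)"
  have sym: "transpose S = S" by (simp add: S_def transpose_scalar transpose_add' add.commute)
  have "u \<bullet> (transpose A *v u) = u \<bullet> (A *v u)"
    by (simp add: transpose_matrix_vector dot_lmul_matrix[symmetric] inner_commute)
  hence "u \<bullet> (S *v u) = u \<bullet> (A *v u)"
    by (simp add: S_def scaleR_matrix_vector_assoc[symmetric] matrix_vector_mult_add_rdistrib inner_add_right)
  moreover have "lam = min_eigenvalue S" by (simp add: lambda_A_def S_def)
  ultimately show ?thesis using rayleigh[OF sym, of u] by simp
qed

lemma f_nonneg: "0 \<le> u \<bullet> (A *v u)"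
  using A_pos[of u] lpos by (smt (verit) mult_nonneg_nonneg zero_le_power2)

lemma H_diff: "H \<xi> (a - b) = H \<xi> a - H \<xi> b"
  by (simp add: H_def inner_diff_right scaleR_diff_left)

lemma td_diff: "td_g r \<gamma> \<phi> s s' a - td_g r \<gamma> \<phi> s s' b = H (s, s') (a - b)"
  by (simp add: td_g_def H_def inner_diff_right inner_diff_left inner_commute algebra_simps
      scaleR_diff_left[symmetric])

lemma td_split: "td_g r \<gamma> \<phi> s s' a = G0 (s, s') + H (s, s') (a - ts)"
  using td_diff[of s s' a ts] by (simp add: G0_def algebra_simps)

lemma H_exp: "measure_pmf.expectation D (\<lambda>\<xi>. z \<bullet> H \<xi> u) = - (z \<bullet> (A *v u))"
  unfolding expD A_inner
  by (simp add: H_def sum_negf[symmetric] inner_diff_left algebra_simps)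

lemma H_sq: "measure_pmf.expectation D (\<lambda>\<xi>. (norm (H \<xi> u))\<^sup>2) \<le> 2 * (u \<bullet> (A *v u))"
proof -
  define a where "a s = \<phi> s \<bullet> u" for s
  have pw: "(norm (H (s, s') u))\<^sup>2 \<le> (a s - \<gamma> * a s')\<^sup>2" for s s'
  proof -
    have "(norm (H (s, s') u))\<^sup>2 = (a s - \<gamma> * a s')\<^sup>2 * (norm (\<phi> s))\<^sup>2"
      by (simp add: H_def a_def power_mult_distrib inner_diff_left power2_commute)
    also have "\<dots> \<le> (a s - \<gamma> * a s')\<^sup>2 * 1"
      using phi_le[of s] by (intro mult_left_mono) (auto simp: power_le_one)
    finally show ?thesis by simp
  qed
  have "measure_pmf.expectation D (\<lambda>\<xi>. (norm (H \<xi> u))\<^sup>2) \<le>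
        (\<Sum>s\<in>UNIV. \<Sum>s'\<in>UNIV. w s s' * (a s - \<gamma> * a s')\<^sup>2)"
    unfolding expD by (intro sum_mono mult_left_mono pw) auto
  also have "\<dots> = (\<Sum>s\<in>UNIV. \<Sum>s'\<in>UNIV. w s s' * (a s)\<^sup>2) - 2 * \<gamma> * (\<Sum>s\<in>UNIV. \<Sum>s'\<in>UNIV. w s s' * (a s * a s'))
      + \<gamma>\<^sup>2 * (\<Sum>s\<in>UNIV. \<Sum>s'\<in>UNIV. w s s' * (a s')\<^sup>2)"
    by (simp add: sum_distrib_left sum_subtractf[symmetric] sum.distrib[symmetric] power2_eq_square algebra_simps)
  also have "(\<Sum>s\<in>UNIV. \<Sum>s'\<in>UNIV. w s s' * (a s')\<^sup>2) = (\<Sum>s\<in>UNIV. \<Sum>s'\<in>UNIV. w s s' * (a s)\<^sup>2)"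
  proof -
    have "(\<Sum>s\<in>UNIV. \<Sum>s'\<in>UNIV. w s s' * (a s')\<^sup>2) = (\<Sum>s'\<in>UNIV. pmf \<mu> s' * (a s')\<^sup>2)" by (rule stat_sum)
    also have "\<dots> = (\<Sum>s\<in>UNIV. \<Sum>s'\<in>UNIV. w s s' * (a s)\<^sup>2)"
      by (simp add: mult.assoc mult.commute[of "pmf (P _) _"] sum_distrib_left[symmetric] sum_distrib_right[symmetric] rowsum)
    finally show ?thesis .
  qed
  finally have c1: "measure_pmf.expectation D (\<lambda>\<xi>. (norm (H \<xi> u))\<^sup>2) \<le> (\<Sum>s\<in>UNIV. \<Sum>s'\<in>UNIV. w s s' * (a s)\<^sup>2) - 2 * \<gamma> * (\<Sum>s\<in>UNIV. \<Sum>s'\<in>UNIV. w s s' * (a s * a s'))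
      + \<gamma>\<^sup>2 * (\<Sum>s\<in>UNIV. \<Sum>s'\<in>UNIV. w s s' * (a s)\<^sup>2)" .
  have c2: "u \<bullet> (A *v u) = (\<Sum>s\<in>UNIV. \<Sum>s'\<in>UNIV. w s s' * (a s)\<^sup>2) - \<gamma> * (\<Sum>s\<in>UNIV. \<Sum>s'\<in>UNIV. w s s' * (a s * a s'))"
    unfolding A_inner
    by (simp add: a_def sum_distrib_left sum_subtractf[symmetric] inner_diff_left power2_eq_square algebra_simps inner_commute)
  have "0 \<le> (\<Sum>s\<in>UNIV. \<Sum>s'\<in>UNIV. w s s' * (a s)\<^sup>2)" by (intro sum_nonneg) auto
  moreover have "\<gamma>\<^sup>2 \<le> 1" using g0 g1 by (simp add: power_le_one)
  ultimately have "\<gamma>\<^sup>2 * (\<Sum>s\<in>UNIV. \<Sum>s'\<in>UNIV. w s s' * (a s)\<^sup>2) \<le> (\<Sum>s\<in>UNIV. \<Sum>s'\<in>UNIV. w s s' * (a s)\<^sup>2)"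
    by (simp add: mult_left_le_one_le)
  thus ?thesis using c1 c2 by linarith
qed

end



lemma nsq_add: "(norm (p + q))\<^sup>2 = (norm p)\<^sup>2 + 2 * (p \<bullet> q) + (norm (q::'a::real_inner))\<^sup>2"
  by (simp add: power2_norm_eq_inner inner_add_left inner_add_right inner_commute)

lemma young: assumes "c > 0" shows "2 * (p \<bullet> q) \<le> c * (norm p)\<^sup>2 + (1/c) * (norm (q::'a::real_inner))\<^sup>2"
proof -
  have "0 \<le> (norm (c *\<^sub>R p - q))\<^sup>2" by simp
  also have "\<dots> = c\<^sup>2 * (norm p)\<^sup>2 - 2 * c * (p \<bullet> q) + (norm q)\<^sup>2"
    by (simp only: power2_norm_eq_inner) (simp add: inner_diff_left inner_diff_right inner_commute power2_eq_square algebra_simps)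
  finally have "2 * c * (p \<bullet> q) \<le> c\<^sup>2 * (norm p)\<^sup>2 + (norm q)\<^sup>2" by simp
  hence "(2 * (p \<bullet> q)) * c \<le> (c * (norm p)\<^sup>2 + (1/c) * (norm q)\<^sup>2) * c"
    using assms by (simp add: algebra_simps power2_eq_square)
  thus ?thesis using assms by (simp add: mult_le_cancel_right)
qed

context td begin

lemma A_ts: "A *v ts = b_e \<mu> P r \<phi>"
  by (simp add: theta_star_def matrix_vector_mul_assoc inv_right[OF inv])

lemma G0_exp: "measure_pmf.expectation D (\<lambda>\<xi>. z \<bullet> G0 \<xi>) = 0"
proof -
  have zb: "z \<bullet> b_e \<mu> P r \<phi> = (\<Sum>s\<in>UNIV. \<Sum>s'\<in>UNIV. w s s' * r s s' * (z \<bullet> \<phi> s))"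
    by (simp add: b_e_def inner_sum_right)
  have "measure_pmf.expectation D (\<lambda>\<xi>. z \<bullet> G0 \<xi>) = z \<bullet> b_e \<mu> P r \<phi> - z \<bullet> (A *v ts)"
    unfolding expD zb A_inner
    by (simp add: G0_def td_g_def sum_subtractf[symmetric] inner_diff_left algebra_simps)
  thus ?thesis by (simp add: A_ts)
qed

lemma sigma_eq: "sigma_sq \<mu> P r \<phi> \<gamma> = measure_pmf.expectation D (\<lambda>\<xi>. (norm (G0 \<xi>))\<^sup>2)"
  unfolding expD sigma_sq_def G0_def by simp

lemma fx_ge: "lam * (norm u)\<^sup>2 \<le> u \<bullet> (A *v u)" by (rule A_pos)

lemma inner_step:
  "measure_pmf.expectation D (\<lambda>\<xi>. (norm (x + (1/16) *\<^sub>R (H \<xi> x - H \<xi> xt + gm)))\<^sup>2)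
   \<le> (norm x)\<^sup>2 - (11/128) * (x \<bullet> (A *v x)) + (3/128) * (xt \<bullet> (A *v xt))
     + (1 / (4 * lam) + 3/256) * (norm (gm + A *v xt))\<^sup>2"
proof -
  define e where "e = gm + A *v xt"
  define W where "W \<xi> = H \<xi> x - H \<xi> xt - A *v xt" for \<xi>
  define fx where "fx = x \<bullet> (A *v x)"
  define ft where "ft = xt \<bullet> (A *v xt)"
  have lp: "lam > 0" by (rule lpos)
  define Ke where "Ke = (4 / lam) * (norm e)\<^sup>2"
  have xe: "2 * (x \<bullet> e) \<le> fx / 4 + Ke"
  proof -
    have "2 * (x \<bullet> e) \<le> (lam/4) * (norm x)\<^sup>2 + (1/(lam/4)) * (norm e)\<^sup>2"
      by (rule young) (use lp in simp)
    moreover have "(lam/4) * (norm x)\<^sup>2 \<le> fx / 4" using A_pos[of x] by (simp add: fx_def)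
    ultimately show ?thesis by (simp add: Ke_def)
  qed
  have pw: "(norm (x + (1/16) *\<^sub>R (H \<xi> x - H \<xi> xt + gm)))\<^sup>2 \<le>
      (norm x)\<^sup>2 + (1/8) * (x \<bullet> W \<xi>) + (1/16) * (fx / 4 + Ke)
      + (1/256) * (3 * (norm (H \<xi> x))\<^sup>2 + 3 * (norm (H \<xi> xt + A *v xt))\<^sup>2 + 3 * (norm e)\<^sup>2)" for \<xi>
  proof -
    have v: "H \<xi> x - H \<xi> xt + gm = W \<xi> + e" by (simp add: W_def e_def)
    have "(norm (x + (1/16) *\<^sub>R (W \<xi> + e)))\<^sup>2 = (norm x)\<^sup>2 + (1/8) * (x \<bullet> W \<xi>) + (1/8) * (x \<bullet> e) + (1/256) * (norm (W \<xi> + e))\<^sup>2"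
      by (simp only: power2_norm_eq_inner) (simp add: inner_add_left inner_add_right inner_commute algebra_simps)
    moreover have "(norm (W \<xi> + e))\<^sup>2 \<le> (3/2) * (norm (W \<xi>))\<^sup>2 + 3 * (norm e)\<^sup>2"
      using young[of "1/2" "W \<xi>" e] by (simp add: nsq_add)
    moreover have "(norm (W \<xi>))\<^sup>2 \<le> 2 * (norm (H \<xi> x))\<^sup>2 + 2 * (norm (H \<xi> xt + A *v xt))\<^sup>2"
    proof -
      have "W \<xi> = H \<xi> x + (- (H \<xi> xt + A *v xt))" by (simp add: W_def)
      hence "(norm (W \<xi>))\<^sup>2 = (norm (H \<xi> x))\<^sup>2 + 2 * (H \<xi> x \<bullet> (- (H \<xi> xt + A *v xt))) + (norm (H \<xi> xt + A *v xt))\<^sup>2"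
        by (simp only: nsq_add norm_minus_cancel)
      moreover have "2 * (H \<xi> x \<bullet> (- (H \<xi> xt + A *v xt))) \<le> 1 * (norm (H \<xi> x))\<^sup>2 + (1/1) * (norm (- (H \<xi> xt + A *v xt)))\<^sup>2"
        by (rule young) simp
      moreover have "norm (- (H \<xi> xt + A *v xt)) = norm (H \<xi> xt + A *v xt)" by (rule norm_minus_cancel)
      ultimately show ?thesis by (simp only:)
    qed
    ultimately show ?thesis using xe unfolding v by argo
  qed
  have E1: "measure_pmf.expectation D (\<lambda>\<xi>. x \<bullet> W \<xi>) = - fx"
    by (simp add: W_def inner_diff_right exp_diff H_exp fx_def)
  have E2: "measure_pmf.expectation D (\<lambda>\<xi>. (norm (H \<xi> xt + A *v xt))\<^sup>2) \<le> 2 * ft"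
  proof -
    have "measure_pmf.expectation D (\<lambda>\<xi>. (norm (H \<xi> xt + A *v xt))\<^sup>2) =
        measure_pmf.expectation D (\<lambda>\<xi>. (norm (H \<xi> xt))\<^sup>2) + 2 * measure_pmf.expectation D (\<lambda>\<xi>. (A *v xt) \<bullet> H \<xi> xt) + (norm (A *v xt))\<^sup>2"
      by (simp add: nsq_add exp_add inner_commute)
    also have "\<dots> = measure_pmf.expectation D (\<lambda>\<xi>. (norm (H \<xi> xt))\<^sup>2) - (norm (A *v xt))\<^sup>2"
      by (simp add: H_exp power2_norm_eq_inner)
    also have "\<dots> \<le> 2 * ft" using H_sq[of xt] zero_le_power2[of "norm (A *v xt)"] unfolding ft_def by linarith
    finally show ?thesis .
  qed
  have "measure_pmf.expectation D (\<lambda>\<xi>. (norm (x + (1/16) *\<^sub>R (H \<xi> x - H \<xi> xt + gm)))\<^sup>2) \<le>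
     measure_pmf.expectation D (\<lambda>\<xi>. (norm x)\<^sup>2 + (1/8) * (x \<bullet> W \<xi>) + (1/16) * (fx / 4 + Ke)
      + (1/256) * (3 * (norm (H \<xi> x))\<^sup>2 + 3 * (norm (H \<xi> xt + A *v xt))\<^sup>2 + 3 * (norm e)\<^sup>2))"
    by (rule exp_mono[OF finD pw])
  also have "\<dots> = (norm x)\<^sup>2 + (1/8) * measure_pmf.expectation D (\<lambda>\<xi>. x \<bullet> W \<xi>) + (1/16) * (fx / 4 + Ke)
      + (1/256) * (3 * measure_pmf.expectation D (\<lambda>\<xi>. (norm (H \<xi> x))\<^sup>2) + 3 * measure_pmf.expectation D (\<lambda>\<xi>. (norm (H \<xi> xt + A *v xt))\<^sup>2) + 3 * (norm e)\<^sup>2)"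
    by (simp add: exp_add)
  also have "\<dots> \<le> (norm x)\<^sup>2 + (1/8) * (- fx) + (1/16) * (fx / 4 + Ke)
      + (1/256) * (3 * (2 * fx) + 3 * (2 * ft) + 3 * (norm e)\<^sup>2)"
    using E1 E2 H_sq[of x] by (simp add: fx_def)
  also have "\<dots> = (norm x)\<^sup>2 - (11/128) * fx + (3/128) * ft + (1 / (4 * lam) + 3/256) * (norm e)\<^sup>2"
    by (simp add: algebra_simps Ke_def)
  finally show ?thesis by (simp add: fx_def ft_def e_def)
qed

end



lemma fin_iid: "finite (set_pmf (D::'a pmf)) \<Longrightarrow> finite (set_pmf (iid_samples D n))"
  by (induction n) auto

lemma len_iid: "xs \<in> set_pmf (iid_samples D n) \<Longrightarrow> length xs = n"
  by (induction n arbitrary: xs) auto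

lemma fin_inner: "finite (set_pmf (D::('s::finite \<times> 's) pmf)) \<Longrightarrow> finite (set_pmf (inner_iter D r \<gamma> \<phi> \<alpha> \<theta>t gm t))"
  by (induction t) auto

lemma fin_epoch: "M > 0 \<Longrightarrow> finite (set_pmf (D::('s::finite \<times> 's) pmf)) \<Longrightarrow> finite (set_pmf (svrg_epoch D r \<gamma> \<phi> \<alpha> M n \<theta>t))"
  unfolding svrg_epoch_def using fin_iid fin_inner by (auto simp: set_pmf_of_set intro!: finite_UN_I fin_iid fin_inner)

lemma fin_outer: "M > 0 \<Longrightarrow> finite (set_pmf (D::('s::finite \<times> 's) pmf)) \<Longrightarrow> finite (set_pmf (svrg_outer D r \<gamma> \<phi> \<alpha> M N \<theta>0 m))"
  by (induction m) (auto simp: fin_epoch)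

lemma iid_exp: "finite (set_pmf (D::'a pmf)) \<Longrightarrow> measure_pmf.expectation (iid_samples D (Suc n)) (F::'a list \<Rightarrow> real) =
   measure_pmf.expectation D (\<lambda>x. measure_pmf.expectation (iid_samples D n) (\<lambda>xs. F (x # xs)))"
  by (simp only: iid_samples.simps(2), subst exp_bind) (auto simp: fin_iid)

lemma iid_lin:
  fixes Z :: "'a \<Rightarrow> real^'d"
  assumes fD: "finite (set_pmf D)" and Z0: "\<And>z. measure_pmf.expectation D (\<lambda>x. z \<bullet> Z x) = 0"
  shows "measure_pmf.expectation (iid_samples D n) (\<lambda>xs. z \<bullet> sum_list (map Z xs)) = 0"
proof (induction n arbitrary: z)
  case 0 thus ?case by simp
next
  case (Suc n)
  show ?case
    by (subst iid_exp[OF fD]) (simp add: inner_add_right exp_add[OF fin_iid[OF fD]] Suc Z0)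
qed

lemma iid_sq:
  fixes Z :: "'a \<Rightarrow> real^'d"
  assumes fD: "finite (set_pmf D)" and Z0: "\<And>z. measure_pmf.expectation D (\<lambda>x. z \<bullet> Z x) = 0"
  shows "measure_pmf.expectation (iid_samples D n) (\<lambda>xs. (norm (sum_list (map Z xs)))\<^sup>2)
     = real n * measure_pmf.expectation D (\<lambda>x. (norm (Z x))\<^sup>2)"
proof (induction n)
  case 0 thus ?case by simp
next
  case (Suc n)
  have "measure_pmf.expectation (iid_samples D (Suc n)) (\<lambda>xs. (norm (sum_list (map Z xs)))\<^sup>2)
     = measure_pmf.expectation D (\<lambda>x. (norm (Z x))\<^sup>2 + 2 * 0
          + measure_pmf.expectation (iid_samples D n) (\<lambda>xs. (norm (sum_list (map Z xs)))\<^sup>2))"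
    by (subst iid_exp[OF fD]) (simp add: nsq_add exp_add[OF fin_iid[OF fD]] iid_lin[OF fD Z0])
  also have "\<dots> = real (Suc n) * measure_pmf.expectation D (\<lambda>x. (norm (Z x))\<^sup>2)"
    by (simp add: Suc exp_add[OF fD] algebra_simps)
  finally show ?case .
qed




lemma exp_cong_fin:
  fixes f g :: "'a \<Rightarrow> real"
  assumes "finite (set_pmf p)" "\<And>x. x \<in> set_pmf p \<Longrightarrow> f x = g x"
  shows "measure_pmf.expectation p f = measure_pmf.expectation p g"
  using assms by (simp add: exp_finite_sum[OF assms(1) order_refl])

lemma exp_nonneg_fin:
  fixes f :: "'a \<Rightarrow> real"
  assumes "finite (set_pmf p)" "\<And>x. 0 \<le> f x"
  shows "0 \<le> measure_pmf.expectation p f"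
  using assms by (simp add: exp_finite_sum[OF assms(1) order_refl] sum_nonneg)

lemma aux_rec: fixes a1 a0 k b C X S n :: real
  shows "a1 \<le> a0 - k * b + C \<Longrightarrow> a0 + k * S \<le> X + n * C \<Longrightarrow> a1 + k * (S + b) \<le> X + (1 + n) * C"
  by (simp add: algebra_simps)

lemma aux_drop: fixes a b c :: real shows "0 \<le> a \<Longrightarrow> a + b \<le> c \<Longrightarrow> b \<le> c" by simp

lemma aux_final: fixes S X M C E K :: real
  assumes M: "M > 0" and h1: "(11/128) * S \<le> X + M * ((3/128) * C + K * E)" and h2: "X \<le> M * (C / 32)"
  shows "S / M \<le> (7/11) * C + (128/11) * K * E"
proof -
  have "X + M * ((3/128) * C + K * E) \<le> M * (C / 32) + M * ((3/128) * C + K * E)" using h2 by simp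
  also have "\<dots> = (11/128) * (M * ((7/11) * C + (128/11) * K * E))" by (simp add: algebra_simps)
  finally have "(11/128) * S \<le> (11/128) * (M * ((7/11) * C + (128/11) * K * E))" using h1 by simp
  hence "S \<le> M * ((7/11) * C + (128/11) * K * E)" by simp
  thus ?thesis using M by (simp add: divide_le_eq mult.commute)
qed

context td begin

abbreviation "fe \<equiv> f_e \<mu> P r \<phi> \<gamma>"
abbreviation "Kc \<equiv> 1 / (4 * lam) + 3/256"

lemma fe_nonneg: "0 \<le> fe \<theta>" unfolding f_e_def by (rule f_nonneg)

lemma fe_ge: "lam * (norm (\<theta> - ts))\<^sup>2 \<le> fe \<theta>" unfolding f_e_def by (rule A_pos)

lemma inner_rec:
  "measure_pmf.expectation (inner_iter D r \<gamma> \<phi> (1/16) \<theta>t gm (Suc t)) (\<lambda>\<theta>. (norm (\<theta> - ts))\<^sup>2)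
   \<le> measure_pmf.expectation (inner_iter D r \<gamma> \<phi> (1/16) \<theta>t gm t) (\<lambda>\<theta>. (norm (\<theta> - ts))\<^sup>2)
     - (11/128) * measure_pmf.expectation (inner_iter D r \<gamma> \<phi> (1/16) \<theta>t gm t) fe
     + ((3/128) * fe \<theta>t + Kc * (norm (gm + A *v (\<theta>t - ts)))\<^sup>2)"
proof -
  let ?p = "inner_iter D r \<gamma> \<phi> (1/16) \<theta>t gm t"
  have fp: "finite (set_pmf ?p)" by (rule fin_inner) simp
  have "measure_pmf.expectation (inner_iter D r \<gamma> \<phi> (1/16) \<theta>t gm (Suc t)) (\<lambda>\<theta>. (norm (\<theta> - ts))\<^sup>2)
     = measure_pmf.expectation ?p (\<lambda>\<theta>. measure_pmf.expectation D (\<lambda>\<xi>.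
          (norm ((case \<xi> of (s, s') \<Rightarrow> \<theta> + (1/16) *\<^sub>R (td_g r \<gamma> \<phi> s s' \<theta> - td_g r \<gamma> \<phi> s s' \<theta>t + gm)) - ts))\<^sup>2))"
    by (simp only: inner_iter.simps(2), subst exp_bind) (auto simp: fp)
  also have "\<dots> = measure_pmf.expectation ?p (\<lambda>\<theta>. measure_pmf.expectation D (\<lambda>\<xi>.
          (norm ((\<theta> - ts) + (1/16) *\<^sub>R (H \<xi> (\<theta> - ts) - H \<xi> (\<theta>t - ts) + gm)))\<^sup>2))"
  proof -
    have "(case \<xi> of (s, s') \<Rightarrow> \<theta> + (1/16) *\<^sub>R (td_g r \<gamma> \<phi> s s' \<theta> - td_g r \<gamma> \<phi> s s' \<theta>t + gm)) - ts
        = (\<theta> - ts) + (1/16) *\<^sub>R (H \<xi> (\<theta> - ts) - H \<xi> (\<theta>t - ts) + gm)" for \<theta> \<xi>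
    proof -
      obtain s s' where xi: "\<xi> = (s, s')" by (cases \<xi>)
      have "H \<xi> (\<theta> - \<theta>t) = H \<xi> ((\<theta> - ts) - (\<theta>t - ts))" by simp
      thus ?thesis using td_diff[of s s' \<theta> \<theta>t] by (simp add: xi H_diff)
    qed
    hence "\<And>\<theta> \<xi>. (norm ((case \<xi> of (s, s') \<Rightarrow> \<theta> + (1/16) *\<^sub>R (td_g r \<gamma> \<phi> s s' \<theta> - td_g r \<gamma> \<phi> s s' \<theta>t + gm)) - ts))\<^sup>2
        = (norm ((\<theta> - ts) + (1/16) *\<^sub>R (H \<xi> (\<theta> - ts) - H \<xi> (\<theta>t - ts) + gm)))\<^sup>2" by metis
    thus ?thesis by (simp only:)
  qed
  also have "\<dots> \<le> measure_pmf.expectation ?p (\<lambda>\<theta>. (norm (\<theta> - ts))\<^sup>2 - (11/128) * fe \<theta>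
        + ((3/128) * fe \<theta>t + Kc * (norm (gm + A *v (\<theta>t - ts)))\<^sup>2))"
    by (rule exp_mono[OF fp], unfold f_e_def, rule order_trans[OF inner_step]) simp
  also have "\<dots> = measure_pmf.expectation ?p (\<lambda>\<theta>. (norm (\<theta> - ts))\<^sup>2)
     - (11/128) * measure_pmf.expectation ?p fe + ((3/128) * fe \<theta>t + Kc * (norm (gm + A *v (\<theta>t - ts)))\<^sup>2)"
    by (simp add: exp_add[OF fp] exp_diff[OF fp])
  finally show ?thesis .
qed


lemma inner_sum:
  "measure_pmf.expectation (inner_iter D r \<gamma> \<phi> (1/16) \<theta>t gm n) (\<lambda>\<theta>. (norm (\<theta> - ts))\<^sup>2)
   + (11/128) * (\<Sum>t<n. measure_pmf.expectation (inner_iter D r \<gamma> \<phi> (1/16) \<theta>t gm t) fe)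
   \<le> (norm (\<theta>t - ts))\<^sup>2 + real n * ((3/128) * fe \<theta>t + Kc * (norm (gm + A *v (\<theta>t - ts)))\<^sup>2)"
proof (induction n)
  case 0 thus ?case by simp
next
  case (Suc n)
  show ?case unfolding sum.lessThan_Suc of_nat_Suc
    by (rule aux_rec[OF inner_rec[of \<theta>t gm n] Suc])
qed

lemma epoch_pt:
  assumes M: "real M = 32 / lam"
  shows "measure_pmf.expectation (pmf_of_set {0..<M}) (\<lambda>t'.
            measure_pmf.expectation (inner_iter D r \<gamma> \<phi> (1/16) \<theta>t gm t') fe)
     \<le> (7/11) * fe \<theta>t + (128/11) * Kc * (norm (gm + A *v (\<theta>t - ts)))\<^sup>2"
proof -
  have lp: "lam > 0" by (rule lpos)
  have Mpos: "M > 0" using M lp by (metis divide_pos_pos of_nat_0_less_iff zero_less_numeral)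
  have s1: "(11/128) * (\<Sum>t<M. measure_pmf.expectation (inner_iter D r \<gamma> \<phi> (1/16) \<theta>t gm t) fe)
     \<le> (norm (\<theta>t - ts))\<^sup>2 + real M * ((3/128) * fe \<theta>t + Kc * (norm (gm + A *v (\<theta>t - ts)))\<^sup>2)"
    by (rule aux_drop[OF _ inner_sum], rule exp_nonneg_fin) (auto intro: fin_inner)
  have Ml: "real M * lam = 32" using M lp by (simp add: field_simps)
  have "32 * (norm (\<theta>t - ts))\<^sup>2 = real M * (lam * (norm (\<theta>t - ts))\<^sup>2)"
    by (simp add: Ml mult.assoc[symmetric])
  also have "\<dots> \<le> real M * fe \<theta>t" using fe_ge[of \<theta>t] by (intro mult_left_mono) auto
  finally have s2: "(norm (\<theta>t - ts))\<^sup>2 \<le> real M * (fe \<theta>t / 32)" by simp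
  have "measure_pmf.expectation (pmf_of_set {0..<M}) (\<lambda>t'.
            measure_pmf.expectation (inner_iter D r \<gamma> \<phi> (1/16) \<theta>t gm t') fe)
      = (\<Sum>t<M. measure_pmf.expectation (inner_iter D r \<gamma> \<phi> (1/16) \<theta>t gm t) fe) / real M"
    using Mpos by (subst integral_pmf_of_set) (auto simp: atLeast0LessThan)
  also have "\<dots> \<le> (7/11) * fe \<theta>t + (128/11) * Kc * (norm (gm + A *v (\<theta>t - ts)))\<^sup>2"
    by (rule aux_final[OF _ s1 s2]) (use Mpos in simp)
  finally show ?thesis .
qed

abbreviation "sg \<equiv> sigma_sq \<mu> P r \<phi> \<gamma>"

lemma sum_list_plus_const: "sum_list (map (\<lambda>\<xi>. Y \<xi> + v) xs) = sum_list (map Y xs) + real (length xs) *\<^sub>R (v::real^'d)"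
  by (induction xs) (auto simp: algebra_simps)

lemma batch_var:
  assumes n: "n > 0"
  shows "measure_pmf.expectation (iid_samples D n) (\<lambda>xs. (norm (batch_grad r \<gamma> \<phi> xs \<theta>t + A *v (\<theta>t - ts)))\<^sup>2)
     \<le> (4 * fe \<theta>t + 2 * sg) / real n"
proof -
  define v where "v = A *v (\<theta>t - ts)"
  define Y where "Y = (\<lambda>(s, s'). td_g r \<gamma> \<phi> s s' \<theta>t)"
  define Z where "Z \<xi> = Y \<xi> + v" for \<xi>
  have Ysplit: "Y \<xi> = G0 \<xi> + H \<xi> (\<theta>t - ts)" for \<xi>
    by (cases \<xi>) (simp add: Y_def td_split)
  have EY: "measure_pmf.expectation D (\<lambda>\<xi>. z \<bullet> Y \<xi>) = - (z \<bullet> v)" for z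
    by (simp add: Ysplit inner_add_right exp_add[OF finD] G0_exp H_exp v_def)
  have Z0: "measure_pmf.expectation D (\<lambda>\<xi>. z \<bullet> Z \<xi>) = 0" for z
    by (simp add: Z_def inner_add_right exp_add[OF finD] EY)
  have fI: "finite (set_pmf (iid_samples D n))" by (rule fin_iid) simp
  have "measure_pmf.expectation (iid_samples D n) (\<lambda>xs. (norm (batch_grad r \<gamma> \<phi> xs \<theta>t + A *v (\<theta>t - ts)))\<^sup>2)
      = measure_pmf.expectation (iid_samples D n) (\<lambda>xs. (1 / real n)\<^sup>2 * (norm (sum_list (map Z xs)))\<^sup>2)"
  proof (rule exp_cong_fin[OF fI])
    fix xs assume "xs \<in> set_pmf (iid_samples D n)"
    hence len: "length xs = n" by (rule len_iid)
    have "batch_grad r \<gamma> \<phi> xs \<theta>t + A *v (\<theta>t - ts) = (1 / real n) *\<^sub>R sum_list (map Z xs)"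
      unfolding Z_def sum_list_plus_const batch_grad_def Y_def[symmetric] using n len
      by (simp add: v_def scaleR_add_right)
    thus "(norm (batch_grad r \<gamma> \<phi> xs \<theta>t + A *v (\<theta>t - ts)))\<^sup>2 = (1 / real n)\<^sup>2 * (norm (sum_list (map Z xs)))\<^sup>2"
      by (simp add: power_divide)
  qed
  also have "\<dots> = (1 / real n)\<^sup>2 * (real n * measure_pmf.expectation D (\<lambda>\<xi>. (norm (Z \<xi>))\<^sup>2))"
    by (simp add: iid_sq[OF finD Z0])
  also have "\<dots> = measure_pmf.expectation D (\<lambda>\<xi>. (norm (Z \<xi>))\<^sup>2) / real n"
    using n by (simp add: power2_eq_square)
  also have "\<dots> \<le> (4 * fe \<theta>t + 2 * sg) / real n"
  proof (rule divide_right_mono)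
    have "measure_pmf.expectation D (\<lambda>\<xi>. (norm (Z \<xi>))\<^sup>2) =
        measure_pmf.expectation D (\<lambda>\<xi>. (norm (Y \<xi>))\<^sup>2) + 2 * measure_pmf.expectation D (\<lambda>\<xi>. v \<bullet> Y \<xi>) + (norm v)\<^sup>2"
      by (simp add: Z_def nsq_add exp_add[OF finD] inner_commute)
    also have "\<dots> = measure_pmf.expectation D (\<lambda>\<xi>. (norm (Y \<xi>))\<^sup>2) - (norm v)\<^sup>2"
      by (simp add: EY power2_norm_eq_inner)
    also have "\<dots> \<le> measure_pmf.expectation D (\<lambda>\<xi>. (norm (Y \<xi>))\<^sup>2)" by simp
    also have "\<dots> \<le> measure_pmf.expectation D (\<lambda>\<xi>. 2 * (norm (G0 \<xi>))\<^sup>2 + 2 * (norm (H \<xi> (\<theta>t - ts)))\<^sup>2)"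
    proof (rule exp_mono[OF finD])
      fix \<xi>
      have "2 * (G0 \<xi> \<bullet> H \<xi> (\<theta>t - ts)) \<le> 1 * (norm (G0 \<xi>))\<^sup>2 + (1/1) * (norm (H \<xi> (\<theta>t - ts)))\<^sup>2"
        by (rule young) simp
      thus "(norm (Y \<xi>))\<^sup>2 \<le> 2 * (norm (G0 \<xi>))\<^sup>2 + 2 * (norm (H \<xi> (\<theta>t - ts)))\<^sup>2"
        by (simp add: Ysplit nsq_add)
    qed
    also have "\<dots> = 2 * sg + 2 * measure_pmf.expectation D (\<lambda>\<xi>. (norm (H \<xi> (\<theta>t - ts)))\<^sup>2)"
      by (simp add: exp_add[OF finD] sigma_eq)
    also have "\<dots> \<le> 4 * fe \<theta>t + 2 * sg"
      using H_sq[of "\<theta>t - ts"] by (simp add: f_e_def)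
    finally show "measure_pmf.expectation D (\<lambda>\<xi>. (norm (Z \<xi>))\<^sup>2) \<le> 4 * fe \<theta>t + 2 * sg" .
  qed simp
  finally show ?thesis .
qed

lemma sg_nonneg: "0 \<le> sg"
  unfolding sigma_sq_def by (intro sum_nonneg) auto

lemma batch_bound:
  assumes c: "c > 0"
  shows "measure_pmf.expectation (iid_samples D (nat \<lceil>(4 * fe \<theta>t + 2 * sg) / (c * lam * (2/3) ^ k)\<rceil>))
     (\<lambda>xs. (norm (batch_grad r \<gamma> \<phi> xs \<theta>t + A *v (\<theta>t - ts)))\<^sup>2) \<le> c * lam * (2/3) ^ k"
proof -
  define Q where "Q = 4 * fe \<theta>t + 2 * sg"
  define den where "den = c * lam * (2/3::real) ^ k"
  define n where "n = nat \<lceil>Q / den\<rceil>"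
  have dpos: "den > 0" using c lpos by (simp add: den_def)
  have Qnn: "Q \<ge> 0" using fe_nonneg[of \<theta>t] sg_nonneg by (simp add: Q_def)
  have nge: "real n \<ge> Q / den" unfolding n_def by linarith
  show ?thesis
  proof (cases "n = 0")
    case True
    hence "Q / den \<le> 0" using nge by simp
    hence "Q \<le> 0" using dpos by (simp add: divide_le_0_iff)
    hence "fe \<theta>t = 0" using fe_nonneg[of \<theta>t] sg_nonneg by (simp add: Q_def)
    hence "lam * (norm (\<theta>t - ts))\<^sup>2 \<le> 0" using fe_ge[of \<theta>t] by simp
    hence "norm (\<theta>t - ts) = 0" using lpos by (simp add: mult_le_0_iff)
    hence "\<theta>t - ts = 0" by simp
    moreover have "batch_grad r \<gamma> \<phi> [] \<theta>t = 0" by (simp add: batch_grad_def)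
    ultimately have "measure_pmf.expectation (iid_samples D n)
       (\<lambda>xs. (norm (batch_grad r \<gamma> \<phi> xs \<theta>t + A *v (\<theta>t - ts)))\<^sup>2) \<le> den"
      using True dpos by simp
    thus ?thesis by (simp add: Q_def den_def n_def)
  next
    case False
    hence np: "n > 0" by simp
    have "measure_pmf.expectation (iid_samples D n)
       (\<lambda>xs. (norm (batch_grad r \<gamma> \<phi> xs \<theta>t + A *v (\<theta>t - ts)))\<^sup>2) \<le> Q / real n"
      using batch_var[OF np, of \<theta>t] by (simp add: Q_def)
    also have "Q / real n \<le> den"
      using np nge dpos by (simp add: divide_le_eq field_simps mult.commute)
    finally show ?thesis by (simp add: Q_def den_def n_def)
  qed
qed

lemma epoch_bound:
  assumes M: "real M = 32 / lam" and c: "c > 0"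
  shows "measure_pmf.expectation (svrg_epoch D r \<gamma> \<phi> (1/16) M
            (nat \<lceil>(4 * fe \<theta>t + 2 * sg) / (c * lam * (2/3) ^ k)\<rceil>) \<theta>t) fe
     \<le> (7/11) * fe \<theta>t + (128/11) * Kc * (c * lam * (2/3) ^ k)"
proof -
  define n where "n = nat \<lceil>(4 * fe \<theta>t + 2 * sg) / (c * lam * (2/3) ^ k)\<rceil>"
  have Mpos: "M > 0" using M lpos by (metis divide_pos_pos of_nat_0_less_iff zero_less_numeral)
  have fI: "finite (set_pmf (iid_samples D n))" by (rule fin_iid) simp
  have fU: "finite (set_pmf (pmf_of_set {0..<M}))" using Mpos by simp
  have "measure_pmf.expectation (svrg_epoch D r \<gamma> \<phi> (1/16) M n \<theta>t) fe =
     measure_pmf.expectation (iid_samples D n) (\<lambda>xs. measure_pmf.expectation (pmf_of_set {0..<M})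
        (\<lambda>t'. measure_pmf.expectation (inner_iter D r \<gamma> \<phi> (1/16) \<theta>t (batch_grad r \<gamma> \<phi> xs \<theta>t) t') fe))"
    unfolding svrg_epoch_def
    by (subst exp_bind[OF fI]) (auto intro!: finite_UN_I fin_inner exp_cong_fin[OF fI] exp_bind[OF fU] simp: Mpos)
  also have "\<dots> \<le> measure_pmf.expectation (iid_samples D n) (\<lambda>xs.
       (7/11) * fe \<theta>t + (128/11) * Kc * (norm (batch_grad r \<gamma> \<phi> xs \<theta>t + A *v (\<theta>t - ts)))\<^sup>2)"
    by (rule exp_mono[OF fI], rule epoch_pt[OF M])
  also have "\<dots> = (7/11) * fe \<theta>t + (128/11) * Kc * measure_pmf.expectation (iid_samples D n)
       (\<lambda>xs. (norm (batch_grad r \<gamma> \<phi> xs \<theta>t + A *v (\<theta>t - ts)))\<^sup>2)"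
    by (simp add: exp_add[OF fI])
  also have "\<dots> \<le> (7/11) * fe \<theta>t + (128/11) * Kc * (c * lam * (2/3) ^ k)"
    using batch_bound[OF c, of \<theta>t k] lpos by (intro add_left_mono mult_left_mono) (auto simp: n_def)
  finally show ?thesis by (simp add: n_def)
qed

lemma outer_bound:
  assumes M: "real M = 32 / lam" and c: "c > 0"
  defines "N \<equiv> (\<lambda>m \<theta>. nat \<lceil>(4 * fe \<theta> + 2 * sg) / (c * lam * (2/3) ^ m)\<rceil>)"
  shows "measure_pmf.expectation (svrg_outer D r \<gamma> \<phi> (1/16) M N \<theta>0 m) fe
     \<le> (2/3) ^ m * (fe \<theta>0 + 22 * ((128/11) * Kc * (c * lam)))"
proof (induction m)
  case 0
  have "0 \<le> Kc" using lpos by simp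
  hence "0 \<le> 22 * ((128/11) * Kc * (c * lam))" using lpos c by simp
  moreover have "measure_pmf.expectation (svrg_outer D r \<gamma> \<phi> (1/16) M N \<theta>0 0) fe = fe \<theta>0" by simp
  ultimately show ?case by simp
next
  case (Suc m)
  define B where "B = (128/11) * Kc * (c * lam)"
  have B0: "0 \<le> B" using lpos c by (simp add: B_def)
  have Mpos: "M > 0" using M lpos by (metis divide_pos_pos of_nat_0_less_iff zero_less_numeral)
  have fO: "finite (set_pmf (svrg_outer D r \<gamma> \<phi> (1/16) M N \<theta>0 m))" by (rule fin_outer[OF Mpos]) simp
  have "measure_pmf.expectation (svrg_outer D r \<gamma> \<phi> (1/16) M N \<theta>0 (Suc m)) fe
      = measure_pmf.expectation (svrg_outer D r \<gamma> \<phi> (1/16) M N \<theta>0 m)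
          (\<lambda>\<theta>t. measure_pmf.expectation (svrg_epoch D r \<gamma> \<phi> (1/16) M (N (Suc m) \<theta>t) \<theta>t) fe)"
    by (simp only: svrg_outer.simps(2), rule exp_bind[OF fO]) (rule fin_epoch[OF Mpos], simp)
  also have "\<dots> \<le> measure_pmf.expectation (svrg_outer D r \<gamma> \<phi> (1/16) M N \<theta>0 m)
          (\<lambda>\<theta>t. (7/11) * fe \<theta>t + B * (2/3) ^ Suc m)"
    by (rule exp_mono[OF fO], unfold N_def, rule order_trans[OF epoch_bound[OF M c]], unfold B_def)
       (simp only: mult_ac order_refl)
  also have "\<dots> = (7/11) * measure_pmf.expectation (svrg_outer D r \<gamma> \<phi> (1/16) M N \<theta>0 m) fe + B * (2/3) ^ Suc m"
    by (simp add: exp_add[OF fO])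
  also have "\<dots> \<le> (7/11) * ((2/3) ^ m * (fe \<theta>0 + 22 * B)) + B * (2/3) ^ Suc m"
    using Suc by (simp add: B_def)
  also have "\<dots> \<le> (2/3) ^ Suc m * (fe \<theta>0 + 22 * B)"
  proof -
    have "(2/3) ^ Suc m * (fe \<theta>0 + 22 * B) - ((7/11) * ((2/3) ^ m * (fe \<theta>0 + 22 * B)) + B * (2/3) ^ Suc m)
        = (2/3::real) ^ m * (fe \<theta>0 / 33)"
      by (simp add: algebra_simps)
    moreover have "0 \<le> (2/3::real) ^ m * (fe \<theta>0 / 33)" using fe_nonneg[of \<theta>0] by simp
    ultimately show ?thesis by linarith
  qed
  finally show ?case by (simp add: B_def)
qed
end

theorem theorem2:
  fixes \<mu> :: "('s::finite) pmf" and P :: "'s \<Rightarrow> 's pmf"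
    and \<phi> :: "'s \<Rightarrow> real^'d" and r :: "'s \<Rightarrow> 's \<Rightarrow> real" and \<gamma> :: real
    and M :: nat and c :: real and \<theta>0 :: "real^'d"
  assumes "irreducible_chain P" and "aperiodic_chain P"
    and "stationary_dist \<mu> P"
    and "\<And>s. norm (\<phi> s) \<le> 1"
    and "0 \<le> \<gamma>" and "\<gamma> < 1"
    and "invertible (A_e \<mu> P \<phi> \<gamma>)"
    and "lambda_A \<mu> P \<phi> \<gamma> > 0"
    and "real M = 32 / lambda_A \<mu> P \<phi> \<gamma>"
    and "c > 0"
  shows "\<exists>C1::real. \<forall>m::nat.
    measure_pmf.expectation
      (svrg_outer (sample_pmf \<mu> P) r \<gamma> \<phi> (1/16) M
         (\<lambda>m \<theta>. nat \<lceil>(4 * f_e \<mu> P r \<phi> \<gamma> \<theta> + 2 * sigma_sq \<mu> P r \<phi> \<gamma>)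
                     / (c * lambda_A \<mu> P \<phi> \<gamma> * (2/3) ^ m)\<rceil>)
         \<theta>0 m)
      (f_e \<mu> P r \<phi> \<gamma>)
    \<le> (2/3) ^ m * (f_e \<mu> P r \<phi> \<gamma> \<theta>0 + C1)"
proof -
  interpret td \<mu> P \<phi> r \<gamma>
    by unfold_locales (use assms in auto)
  show ?thesis
    using outer_bound[OF assms(9) assms(10), of \<theta>0] by blast
qed

end
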